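(* Let $I\subseteq\mathfrak{M}$ be an ideal, let $Z=\{z_1,\dots,z_s\}$ be a set of distinct indeterminates in $X$, let $\sigma$ be a $Z$-separating term ordering for $I$, and let $\{\frac1{c_1}f_1,\dots,\frac1{c_s}f_s,g_1,\dots,g_t\}$ be a $Z$-separating $\sigma$-Gröbner basis of $I$ (with $(f_1,\dots,f_s)$ coherently $Z$-separating, $c_i=\mathrm{LC}_\sigma(f_i)$, $z_i=\mathrm{LT}_\sigma(f_i)$, and $\{g_1,\dots,g_t\}$ the reduced $\hat\sigma$-Gröbner basis of $I\cap\widehat P$). Write $X\setminus Z=\{y_1,\dots,y_{n-s}\}$. (a) Let $\varphi:P\to\widehat P$ be the $K$-algebra homomorphism with $\varphi(x_i)=x_i$ if $x_i\notin Z$ and $\varphi(x_i)=\mathrm{tail}_{z_j}(f_j)$ if $x_i=z_j$. Then $\varphi$ induces a $K$-algebra isomorphism $\Phi:P/I\to\widehat P/(I\cap\widehat P)$, $\Phi(x_i+I)=\varphi(x_i)+(I\cap\widehat P)$. (b) The inverse $\Phi^{-1}$ is given by $y_i+(I\cap\widehat P)\mapsto y_i+I$ for $i=1,\dots,n-s$. (c) $\Phi$ and $\Phi^{-1}$ do not depend on the choice of the $Z$-separating $\sigma$-Gröbner basis of $I$; in particular they may be defined using the reduced $\sigma$-Gröbner basis of $I$.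
   Context: $K$ is a field, $P=K[x_1,\dots,x_n]$, $X=\{x_1,\dots,x_n\}$, $\mathfrak{M}=\langle x_1,\dots,x_n\rangle$, $\widehat P=K[X\setminus Z]$, $\hat\sigma$ the restriction of $\sigma$ to $\widehat P$. For $f\in P$, $\mathrm{indets}(f)$ is the set of indeterminates dividing some term in the support of $f$. For $f\in\mathfrak{M}$ with nonzero degree-one part $\mathrm{Lin}_{\mathfrak{M}}(f)$, $z\in\mathrm{indets}(\mathrm{Lin}_{\mathfrak M}(f))$, and $c\neq 0$ the coefficient of $z$ in $f$, set $\mathrm{tail}_z(f)=z-\frac1cf$; $f$ is $z$-separating if $z\notin\mathrm{indets}(\mathrm{tail}_z(f))$. A tuple $(f_1,\dots,f_s)$ of nonzero elements of $\mathfrak M$ is coherently $Z$-separating if each $f_i$ is $z_i$-separating and $z_i\notin\mathrm{indets}(f_j)$ for $j\ne i$. A term ordering $\sigma$ is a $Z$-separating term ordering for $I$ if there are $f_1,\dots,f_s\in I\setminus\{0\}$ with $z_i=\mathrm{LT}_\sigma(f_i)$ and $(f_1,\dots,f_s)$ coherently $Z$-separating. For such $\sigma$, a $Z$-separating $\sigma$-Gröbner basis of $I$ is a $\sigma$-Gröbner basis of the form $\{\frac1{c_1}f_1,\dots,\frac1{c_s}f_s,g_1,\dots,g_t\}$ with $(f_1,\dots,f_s)$ coherently $Z$-separating, $c_i=\mathrm{LC}_\sigma(f_i)$, $z_i=\mathrm{LT}_\sigma(f_i)$, and $\{g_1,\dots,g_t\}$ the reduced $\hat\sigma$-Gröbner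 basis of $I\cap\widehat P$. *)

theory Defs
  imports "HOL-Library.Poly_Mapping" "HOL-Algebra.QuotRing"
begin

text \<open>Multivariate polynomials over a field 'k in the finitely many indeterminates
  given by the elements of a finite type 'v (the set X = UNIV).\<close>

type_synonym 'v pterm = "'v \<Rightarrow>\<^sub>0 nat"
type_synonym ('v, 'k) mpoly = "('v \<Rightarrow>\<^sub>0 nat) \<Rightarrow>\<^sub>0 'k"

definition mpoly_ring :: "('v, 'k::field) mpoly ring" where
  "mpoly_ring = \<lparr>carrier = UNIV, monoid.mult = (*), one = 1, zero = 0, add = (+)\<rparr>"

definition var :: "'v \<Rightarrow> ('v, 'k::field) mpoly" where
  "var v = Poly_Mapping.single (Poly_Mapping.single v 1) 1"

definition const :: "'k \<Rightarrow> ('v, 'k::field) mpoly" where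
  "const c = Poly_Mapping.single 0 c"

definition indets :: "('v, 'k::field) mpoly \<Rightarrow> 'v set" where
  "indets f = (\<Union>t\<in>Poly_Mapping.keys f. Poly_Mapping.keys t)"

definition Mideal :: "('v, 'k::field) mpoly set" where
  "Mideal = {f. Poly_Mapping.lookup f 0 = 0}"

definition Phat :: "'v set \<Rightarrow> ('v, 'k::field) mpoly set" where
  "Phat Z = {f. indets f \<subseteq> - Z}"

definition Phat_ring :: "'v set \<Rightarrow> ('v, 'k::field) mpoly ring" where
  "Phat_ring Z = mpoly_ring\<lparr>carrier := Phat Z\<rparr>"

definition lin_part :: "('v, 'k::field) mpoly \<Rightarrow> ('v, 'k) mpoly" where
  "lin_part f = (\<Sum>v\<in>indets f. Poly_Mapping.single (Poly_Mapping.single v 1) (Poly_Mapping.lookup f (Poly_Mapping.single v 1)))"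

definition tail :: "'v \<Rightarrow> ('v, 'k::field) mpoly \<Rightarrow> ('v, 'k) mpoly" where
  "tail z f = var z - const (1 / Poly_Mapping.lookup f (Poly_Mapping.single z 1)) * f"

definition z_separating :: "'v \<Rightarrow> ('v, 'k::field) mpoly \<Rightarrow> bool" where
  "z_separating z f \<longleftrightarrow> f \<in> Mideal \<and> lin_part f \<noteq> 0 \<and> z \<in> indets (lin_part f)
      \<and> z \<notin> indets (tail z f)"

definition coh_Z_sep :: "nat \<Rightarrow> (nat \<Rightarrow> 'v) \<Rightarrow> (nat \<Rightarrow> ('v, 'k::field) mpoly) \<Rightarrow> bool" where
  "coh_Z_sep s z f \<longleftrightarrow> (\<forall>i<s. f i \<noteq> 0 \<and> f i \<in> Mideal \<and> z_separating (z i) (f i)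
      \<and> (\<forall>j<s. j \<noteq> i \<longrightarrow> z i \<notin> indets (f j)))"

definition term_order :: "('v pterm \<Rightarrow> 'v pterm \<Rightarrow> bool) \<Rightarrow> bool" where
  "term_order \<sigma> \<longleftrightarrow> (\<forall>t. \<sigma> t t) \<and> (\<forall>s t. \<sigma> s t \<and> \<sigma> t s \<longrightarrow> s = t)
     \<and> (\<forall>s t u. \<sigma> s t \<and> \<sigma> t u \<longrightarrow> \<sigma> s u) \<and> (\<forall>s t. \<sigma> s t \<or> \<sigma> t s)
     \<and> (\<forall>s t u. \<sigma> s t \<longrightarrow> \<sigma> (s + u) (t + u)) \<and> (\<forall>t. \<sigma> 0 t)"

definition restr_order :: "('v pterm \<Rightarrow> 'v pterm \<Rightarrow> bool) \<Rightarrow> 'v set \<Rightarrow> 'v pterm \<Rightarrow> 'v pterm \<Rightarrow> bool" where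
  "restr_order \<sigma> Z s t \<longleftrightarrow> Poly_Mapping.keys s \<inter> Z = {} \<and> Poly_Mapping.keys t \<inter> Z = {} \<and> \<sigma> s t"

definition LT :: "('v pterm \<Rightarrow> 'v pterm \<Rightarrow> bool) \<Rightarrow> ('v, 'k::field) mpoly \<Rightarrow> 'v pterm" where
  "LT \<sigma> f = (THE t. t \<in> Poly_Mapping.keys f \<and> (\<forall>u\<in>Poly_Mapping.keys f. \<sigma> u t))"

definition LC :: "('v pterm \<Rightarrow> 'v pterm \<Rightarrow> bool) \<Rightarrow> ('v, 'k::field) mpoly \<Rightarrow> 'k" where
  "LC \<sigma> f = Poly_Mapping.lookup f (LT \<sigma> f)"

definition tdvd :: "'v pterm \<Rightarrow> 'v pterm \<Rightarrow> bool" where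
  "tdvd s t \<longleftrightarrow> (\<exists>u. t = s + u)"

text \<open>G is a sigma-Groebner basis of J: a finite set of nonzero elements of J whose leading
  terms generate the leading term ideal of J (a term lies in a monomial ideal iff it is
  divisible by one of the generating terms).\<close>
definition is_GB :: "('v pterm \<Rightarrow> 'v pterm \<Rightarrow> bool) \<Rightarrow> ('v, 'k::field) mpoly set \<Rightarrow> ('v, 'k) mpoly set \<Rightarrow> bool" where
  "is_GB \<sigma> G J \<longleftrightarrow> finite G \<and> G \<subseteq> J \<and> 0 \<notin> G
     \<and> (\<forall>f\<in>J. f \<noteq> 0 \<longrightarrow> (\<exists>g\<in>G. tdvd (LT \<sigma> g) (LT \<sigma> f)))"

definition is_reduced_GB :: "('v pterm \<Rightarrow> 'v pterm \<Rightarrow> bool) \<Rightarrow> ('v, 'k::field) mpoly set \<Rightarrow> ('v, 'k) mpoly set \<Rightarrow> bool" where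
  "is_reduced_GB \<sigma> G J \<longleftrightarrow> is_GB \<sigma> G J \<and>
     (\<forall>g\<in>G. LC \<sigma> g = 1 \<and> (\<forall>t\<in>Poly_Mapping.keys g. \<forall>g'\<in>G. g' \<noteq> g \<longrightarrow> \<not> tdvd (LT \<sigma> g') t))"

definition Z_sep_order :: "('v pterm \<Rightarrow> 'v pterm \<Rightarrow> bool) \<Rightarrow> ('v, 'k::field) mpoly set \<Rightarrow> nat \<Rightarrow> (nat \<Rightarrow> 'v) \<Rightarrow> bool" where
  "Z_sep_order \<sigma> I s z \<longleftrightarrow> term_order \<sigma> \<and> (\<exists>f. (\<forall>i<s. f i \<in> I \<and> f i \<noteq> 0
       \<and> LT \<sigma> (f i) = Poly_Mapping.single (z i) 1) \<and> coh_Z_sep s z f)"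

definition basis_set :: "('v pterm \<Rightarrow> 'v pterm \<Rightarrow> bool) \<Rightarrow> nat \<Rightarrow> (nat \<Rightarrow> ('v, 'k::field) mpoly) \<Rightarrow> ('v, 'k) mpoly set \<Rightarrow> ('v, 'k) mpoly set" where
  "basis_set \<sigma> s f G = {const (1 / LC \<sigma> (f i)) * f i | i. i < s} \<union> G"

definition Z_sep_GB :: "('v pterm \<Rightarrow> 'v pterm \<Rightarrow> bool) \<Rightarrow> ('v, 'k::field) mpoly set \<Rightarrow> nat \<Rightarrow> (nat \<Rightarrow> 'v)
     \<Rightarrow> (nat \<Rightarrow> ('v, 'k) mpoly) \<Rightarrow> ('v, 'k) mpoly set \<Rightarrow> bool" where
  "Z_sep_GB \<sigma> I s z f G \<longleftrightarrow> coh_Z_sep s z f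
     \<and> (\<forall>i<s. LT \<sigma> (f i) = Poly_Mapping.single (z i) 1)
     \<and> is_GB \<sigma> (basis_set \<sigma> s f G) I
     \<and> is_reduced_GB (restr_order \<sigma> (z ` {..<s})) G (I \<inter> Phat (z ` {..<s}))"

definition subst :: "('v \<Rightarrow> ('v, 'k::field) mpoly) \<Rightarrow> ('v, 'k) mpoly \<Rightarrow> ('v, 'k) mpoly" where
  "subst h f = (\<Sum>t\<in>Poly_Mapping.keys f. const (Poly_Mapping.lookup f t) * (\<Prod>v\<in>Poly_Mapping.keys t. h v ^ Poly_Mapping.lookup t v))"

definition phi :: "nat \<Rightarrow> (nat \<Rightarrow> 'v) \<Rightarrow> (nat \<Rightarrow> ('v, 'k::field) mpoly) \<Rightarrow> ('v, 'k) mpoly \<Rightarrow> ('v, 'k) mpoly" where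
  "phi s z f = subst (\<lambda>x. if x \<in> z ` {..<s} then tail x (f (inv_into {..<s} z x)) else var x)"

end

theory Submission
  imports Defs "HOL-Algebra.Subrings"
begin

lemma mpoly_ring_simps[simp]:
  "carrier (mpoly_ring::('v,'k::field) mpoly ring) = UNIV"
  "mult (mpoly_ring::('v,'k::field) mpoly ring) = (*)"
  "add (mpoly_ring::('v,'k::field) mpoly ring) = (+)"
  "one (mpoly_ring::('v,'k::field) mpoly ring) = 1"
  "zero (mpoly_ring::('v,'k::field) mpoly ring) = 0"
  by (simp_all add: mpoly_ring_def)

lemma cring_mpoly: "cring (mpoly_ring::('v,'k::field) mpoly ring)"
proof (rule cringI)
  show "abelian_group (mpoly_ring::('v,'k::field) mpoly ring)"
    by (rule abelian_groupI) (auto simp: algebra_simps intro: exI[of _ "- _"])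
  show "Group.comm_monoid (mpoly_ring::('v,'k::field) mpoly ring)"
    by (rule comm_monoidI) (auto simp: algebra_simps)
qed (auto simp: algebra_simps)

lemma a_inv_mpoly[simp]: "a_inv (mpoly_ring::('v,'k::field) mpoly ring) x = - x"
proof -
  interpret cring "mpoly_ring::('v,'k::field) mpoly ring" by (rule cring_mpoly)
  show ?thesis using minus_equality[of "-x" x] by simp
qed

context
  fixes I :: "('v,'k::field) mpoly set"
  assumes idl: "ideal I mpoly_ring"
begin
lemma I_zero: "0 \<in> I"
  using additive_subgroup.zero_closed[OF ideal.axioms(1)[OF idl]] by simp
lemma I_add: "a \<in> I \<Longrightarrow> b \<in> I \<Longrightarrow> a + b \<in> I"
  using additive_subgroup.a_closed[OF ideal.axioms(1)[OF idl]] by simp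
lemma I_lmult: "a \<in> I \<Longrightarrow> x * a \<in> I"
  using ideal.I_l_closed[OF idl] by simp
lemma I_neg: "a \<in> I \<Longrightarrow> - a \<in> I"
  using I_lmult[of a "-1"] by simp
lemma I_diff: "a \<in> I \<Longrightarrow> b \<in> I \<Longrightarrow> a - b \<in> I"
  using I_add[of a "-b"] I_neg[of b] by simp
lemma I_sum: "(\<And>x. x \<in> S \<Longrightarrow> g x \<in> I) \<Longrightarrow> sum g S \<in> I"
  by (induction S rule: infinite_finite_induct) (auto simp: I_zero I_add)
lemma I_pow_cong: "x - y \<in> I \<Longrightarrow> x ^ n - y ^ n \<in> I"
proof (induction n)
  case 0 then show ?case by (simp add: I_zero)
next
  case (Suc n)
  have "x ^ Suc n - y ^ Suc n = x * (x ^ n - y ^ n) + (x - y) * y ^ n"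
    by (simp add: algebra_simps)
  also have "\<dots> \<in> I" using Suc I_add I_lmult[of "x - y" "y^n"]
    by (metis I_lmult mult.commute)
  finally show ?case .
qed
lemma I_prod_cong: "(\<And>v. v \<in> S \<Longrightarrow> x v - y v \<in> I) \<Longrightarrow> prod x S - prod y S \<in> I"
proof (induction S rule: infinite_finite_induct)
  case (insert a F)
  have "prod x (insert a F) - prod y (insert a F) = x a * (prod x F - prod y F) + (x a - y a) * prod y F"
    using insert by (simp add: algebra_simps)
  also have "\<dots> \<in> I" using insert I_add I_lmult by (metis insertI1 insertCI mult.commute)
  finally show ?case .
qed (auto simp: I_zero)
end

lemma expand_pm: "(\<Sum>t\<in>Poly_Mapping.keys f. Poly_Mapping.single t (Poly_Mapping.lookup f t)) = (f :: 'a \<Rightarrow>\<^sub>0 'b::comm_monoid_add)"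
proof (rule poly_mapping_eqI)
  fix k
  show "Poly_Mapping.lookup (\<Sum>t\<in>Poly_Mapping.keys f. Poly_Mapping.single t (Poly_Mapping.lookup f t)) k = Poly_Mapping.lookup f k"
    by (cases "k \<in> Poly_Mapping.keys f") (auto simp: lookup_sum lookup_single when_def in_keys_iff)
qed

lemma var_pow: "var v ^ n = (Poly_Mapping.single (Poly_Mapping.single v n) 1 :: ('v,'k::field) mpoly)"
  by (induction n) (auto simp: var_def mult_single single_add[symmetric] add.commute)

lemma prod_single: "(\<Prod>v\<in>S. Poly_Mapping.single (g v) (1::'k::field)) = Poly_Mapping.single (sum g S) 1"
  by (induction S rule: infinite_finite_induct) (auto simp: mult_single)

lemma monom_expand: "(\<Prod>v\<in>Poly_Mapping.keys t. var v ^ Poly_Mapping.lookup t v) = (Poly_Mapping.single t 1 :: ('v,'k::field) mpoly)"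
  by (simp add: var_pow prod_single expand_pm)

lemma const_mult_single: "const c * Poly_Mapping.single t 1 = Poly_Mapping.single t c"
  by (simp add: const_def mult_single)

lemma subst_var: "subst var a = a"
  unfolding subst_def monom_expand const_mult_single by (rule expand_pm)

lemma subst_cong:
  assumes idl: "ideal I mpoly_ring" and h: "\<And>v. h v - var v \<in> I"
  shows "subst h a - a \<in> I"
proof -
  have "subst h a - a = subst h a - subst var a" by (simp add: subst_var)
  also have "\<dots> = (\<Sum>t\<in>Poly_Mapping.keys a. const (Poly_Mapping.lookup a t) *
     ((\<Prod>v\<in>Poly_Mapping.keys t. h v ^ Poly_Mapping.lookup t v) - (\<Prod>v\<in>Poly_Mapping.keys t. var v ^ Poly_Mapping.lookup t v)))"
    by (simp add: subst_def sum_subtractf algebra_simps)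
  also have "\<dots> \<in> I"
    by (intro I_sum[OF idl] I_lmult[OF idl] I_prod_cong[OF idl] I_pow_cong[OF idl] h)
  finally show ?thesis .
qed


lemma indets_add: "indets (p + q) \<subseteq> indets p \<union> indets q"
  unfolding indets_def using keys_add[of p q] by blast
lemma indets_diff: "indets (p - q) \<subseteq> indets p \<union> indets q"
  unfolding indets_def using keys_diff[of p q] by blast
lemma indets_uminus: "indets (- p) = indets p"
  unfolding indets_def by simp
lemma indets_mult: "indets (p * q) \<subseteq> indets p \<union> indets q"
proof
  fix v assume "v \<in> indets (p * q)"
  then obtain t where t: "t \<in> Poly_Mapping.keys (p * q)" "v \<in> Poly_Mapping.keys t"
    unfolding indets_def by blast
  then obtain a b where "t = a + b" "a \<in> Poly_Mapping.keys p" "b \<in> Poly_Mapping.keys q"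
    using keys_mult[of p q] by blast
  then show "v \<in> indets p \<union> indets q"
    using t keys_add[of a b] unfolding indets_def by blast
qed
lemma indets_const: "indets (const c) = {}"
  by (simp add: indets_def const_def)
lemma indets_one: "indets (1::('v,'k::field) mpoly) = {}"
  by (simp add: indets_def)
lemma indets_var: "indets (var v :: ('v,'k::field) mpoly) = {v}"
  by (simp add: indets_def var_def)

lemma Phat_add: "p \<in> Phat Z \<Longrightarrow> q \<in> Phat Z \<Longrightarrow> p + q \<in> Phat Z"
  using indets_add[of p q] by (auto simp: Phat_def)
lemma Phat_diff: "p \<in> Phat Z \<Longrightarrow> q \<in> Phat Z \<Longrightarrow> p - q \<in> Phat Z"
  using indets_diff[of p q] by (auto simp: Phat_def)
lemma Phat_uminus: "p \<in> Phat Z \<Longrightarrow> - p \<in> Phat Z"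
  by (auto simp: Phat_def indets_uminus)
lemma Phat_mult: "p \<in> Phat Z \<Longrightarrow> q \<in> Phat Z \<Longrightarrow> p * q \<in> Phat Z"
  using indets_mult[of p q] by (auto simp: Phat_def)
lemma Phat_const: "const c \<in> Phat Z"
  by (simp add: Phat_def indets_const)
lemma Phat_one: "1 \<in> Phat Z"
  by (simp add: Phat_def indets_one)
lemma Phat_zero: "0 \<in> Phat Z"
  by (simp add: Phat_def indets_def)
lemma Phat_var: "v \<notin> Z \<Longrightarrow> var v \<in> Phat Z"
  by (simp add: Phat_def indets_var)
lemma Phat_pow: "p \<in> Phat Z \<Longrightarrow> p ^ n \<in> Phat Z"
  by (induction n) (auto simp: Phat_one Phat_mult)
lemma Phat_prod: "(\<And>x. x \<in> S \<Longrightarrow> g x \<in> Phat Z) \<Longrightarrow> prod g S \<in> Phat Z"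
  by (induction S rule: infinite_finite_induct) (auto simp: Phat_one Phat_mult)
lemma Phat_sum: "(\<And>x. x \<in> S \<Longrightarrow> g x \<in> Phat Z) \<Longrightarrow> sum g S \<in> Phat Z"
  by (induction S rule: infinite_finite_induct) (auto simp: Phat_zero Phat_add)
lemma Phat_subst: "(\<And>v. h v \<in> Phat Z) \<Longrightarrow> subst h a \<in> Phat Z"
  unfolding subst_def by (intro Phat_sum Phat_mult Phat_const Phat_prod Phat_pow) auto

lemma tail_Phat:
  assumes "coh_Z_sep s z f" "i < s"
  shows "tail (z i) (f i) \<in> Phat (z ` {..<s})"
proof -
  have sep: "z i \<notin> indets (tail (z i) (f i))" using assms by (auto simp: coh_Z_sep_def z_separating_def)
  have oth: "\<And>j. j < s \<Longrightarrow> j \<noteq> i \<Longrightarrow> z j \<notin> indets (f i)" using assms by (auto simp: coh_Z_sep_def)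
  have sub: "indets (tail (z i) (f i)) \<subseteq> {z i} \<union> indets (f i)"
    unfolding tail_def using indets_diff indets_mult indets_var indets_const by fastforce
  show ?thesis unfolding Phat_def mem_Collect_eq
  proof (rule subsetI, rule ComplI)
    fix w assume w: "w \<in> indets (tail (z i) (f i))" "w \<in> z ` {..<s}"
    then obtain j where j: "j < s" "w = z j" by auto
    then show False using sep oth sub w by (cases "j = i") auto
  qed
qed

definition hsub where
  "hsub s z f = (\<lambda>x. if x \<in> z ` {..<s} then tail x (f (inv_into {..<s} z x)) else var x)"

lemma phi_hsub: "phi s z f = subst (hsub s z f)" by (simp add: phi_def hsub_def)

lemma phi_Phat:
  assumes "coh_Z_sep s z f" "inj_on z {..<s}"
  shows "phi s z f a \<in> Phat (z ` {..<s})"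
  unfolding phi_hsub
proof (rule Phat_subst)
  fix v show "hsub s z f v \<in> Phat (z ` {..<s})"
  proof (cases "v \<in> z ` {..<s}")
    case True
    then obtain i where i: "i < s" "v = z i" by auto
    then have "inv_into {..<s} z v = i" using assms(2) by (simp add: inv_into_f_f)
    then show ?thesis using True i tail_Phat[OF assms(1) i(1)] by (simp add: hsub_def)
  qed (simp add: hsub_def Phat_var)
qed

lemma phi_cong:
  assumes idl: "ideal I mpoly_ring" and inj: "inj_on z {..<s}"
    and fI: "\<And>i. i < s \<Longrightarrow> var (z i) - tail (z i) (f i) \<in> I"
  shows "phi s z f a - a \<in> I"
  unfolding phi_hsub
proof (rule subst_cong[OF idl])
  fix v show "hsub s z f v - var v \<in> I"
  proof (cases "v \<in> z ` {..<s}")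
    case True
    then obtain i where i: "i < s" "v = z i" by auto
    then have "inv_into {..<s} z v = i" using inj by (simp add: inv_into_f_f)
    then have "hsub s z f v - var v = - (var (z i) - tail (z i) (f i))" using True i by (simp add: hsub_def)
    then show ?thesis using I_neg[OF idl fI[OF i(1)]] by simp
  qed (simp add: hsub_def I_zero[OF idl])
qed


lemma Phat_ring_simps[simp]:
  "carrier (Phat_ring Z :: ('v,'k::field) mpoly ring) = Phat Z"
  "mult (Phat_ring Z :: ('v,'k::field) mpoly ring) = (*)"
  "add (Phat_ring Z :: ('v,'k::field) mpoly ring) = (+)"
  "one (Phat_ring Z :: ('v,'k::field) mpoly ring) = 1"
  "zero (Phat_ring Z :: ('v,'k::field) mpoly ring) = 0"
  by (simp_all add: Phat_ring_def mpoly_ring_def)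

lemma subring_Phat: "subring (Phat Z) (mpoly_ring :: ('v,'k::field) mpoly ring)"
proof -
  interpret cring "mpoly_ring :: ('v,'k::field) mpoly ring" by (rule cring_mpoly)
  show ?thesis by (rule subringI) (auto simp: Phat_one Phat_uminus Phat_mult Phat_add)
qed

lemma ring_Phat: "ring (Phat_ring Z :: ('v,'k::field) mpoly ring)"
proof -
  interpret cring "mpoly_ring :: ('v,'k::field) mpoly ring" by (rule cring_mpoly)
  show ?thesis unfolding Phat_ring_def by (rule subring_is_ring[OF subring_Phat])
qed

lemma a_inv_Phat: "x \<in> Phat Z \<Longrightarrow> a_inv (Phat_ring Z :: ('v,'k::field) mpoly ring) x = - x"
proof -
  assume x: "x \<in> Phat Z"
  interpret ring "Phat_ring Z :: ('v,'k::field) mpoly ring" by (rule ring_Phat)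
  show ?thesis using minus_equality[of "-x" x] x by (simp add: Phat_uminus)
qed

lemma ideal_J:
  assumes idl: "ideal I (mpoly_ring :: ('v,'k::field) mpoly ring)"
  shows "ideal (I \<inter> Phat Z) (Phat_ring Z)"
proof -
  interpret ring "Phat_ring Z :: ('v,'k::field) mpoly ring" by (rule ring_Phat)
  show ?thesis
  proof (rule idealI)
    show "ring (Phat_ring Z)" by (rule ring_Phat)
    have ne: "0 \<in> I \<inter> Phat Z" using I_zero[OF idl] Phat_zero by blast
    show "subgroup (I \<inter> Phat Z) (add_monoid (Phat_ring Z))"
      apply (rule add.subgroupI)
      apply simp
      using ne apply blast
      by (auto simp: a_inv_Phat I_neg[OF idl] Phat_uminus I_add[OF idl] Phat_add I_zero[OF idl] Phat_zero)
  qed (auto simp: I_lmult[OF idl] Phat_mult, metis I_lmult[OF idl] mult.commute)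
qed

lemma coset_img: "a_r_coset R J x = (\<lambda>h. add R h x) ` J"
  by (auto simp: a_r_coset_def r_coset_def)

lemma coset_eq:
  assumes "0 \<in> J" "\<And>a b. a \<in> J \<Longrightarrow> b \<in> J \<Longrightarrow> a + b \<in> J" "\<And>a b. a \<in> J \<Longrightarrow> b \<in> J \<Longrightarrow> a - b \<in> J"
  shows "((\<lambda>h. h + x) ` J = (\<lambda>h. h + (y::'a::ab_group_add)) ` J) \<longleftrightarrow> x - y \<in> J"
proof
  assume "(\<lambda>h. h + x) ` J = (\<lambda>h. h + y) ` J"
  then have "0 + x \<in> (\<lambda>h. h + y) ` J" using assms(1) by blast
  then obtain h where "h \<in> J" "x = h + y" by auto
  then show "x - y \<in> J" by simp
next
  assume d: "x - y \<in> J"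
  show "(\<lambda>h. h + x) ` J = (\<lambda>h. h + y) ` J"
  proof
    show "(\<lambda>h. h + x) ` J \<subseteq> (\<lambda>h. h + y) ` J"
    proof
      fix w assume "w \<in> (\<lambda>h. h + x) ` J"
      then obtain h where "h \<in> J" "w = h + x" by auto
      then show "w \<in> (\<lambda>h. h + y) ` J" using assms(2)[of h "x - y"] d by (auto intro!: image_eqI[of _ _ "h + (x - y)"])
    qed
    show "(\<lambda>h. h + y) ` J \<subseteq> (\<lambda>h. h + x) ` J"
    proof
      fix w assume "w \<in> (\<lambda>h. h + y) ` J"
      then obtain h where "h \<in> J" "w = h + y" by auto
      then show "w \<in> (\<lambda>h. h + x) ` J" using assms(3)[of h "x - y"] d by (auto intro!: image_eqI[of _ _ "h - (x - y)"])
    qed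
  qed
qed


lemma iso_part:
  fixes I :: "('v,'k::field) mpoly set"
  assumes idl: "ideal I mpoly_ring" and inj: "inj_on z {..<s}" and coh: "coh_Z_sep s z f"
    and fI: "\<And>i. i < s \<Longrightarrow> var (z i) - tail (z i) (f i) \<in> I"
  shows "\<exists>\<Phi>. \<Phi> \<in> ring_iso (mpoly_ring Quot I)
                   (Phat_ring (z ` {..<s}) Quot (I \<inter> Phat (z ` {..<s})))
      \<and> (\<forall>a. \<Phi> (a_r_coset mpoly_ring I a)
              = a_r_coset (Phat_ring (z ` {..<s})) (I \<inter> Phat (z ` {..<s})) (phi s z f a))
      \<and> (\<forall>y. y \<notin> z ` {..<s} \<longrightarrow>
           inv_into (carrier (mpoly_ring Quot I)) \<Phi>
             (a_r_coset (Phat_ring (z ` {..<s})) (I \<inter> Phat (z ` {..<s})) (var y))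
           = a_r_coset mpoly_ring I (var y))"
proof -
  define Z where "Z = z ` {..<s}"
  define J where "J = I \<inter> Phat Z"
  define q where "q a = a_r_coset (mpoly_ring :: ('v,'k) mpoly ring) I a" for a
  define r where "r x = a_r_coset (Phat_ring Z :: ('v,'k) mpoly ring) J x" for x
  define ph where "ph = phi s z f"
  interpret IP: ideal I "mpoly_ring :: ('v,'k) mpoly ring" by (rule idl)
  interpret JH: ideal J "Phat_ring Z :: ('v,'k) mpoly ring" unfolding J_def by (rule ideal_J[OF idl])
  have J0: "0 \<in> J" using I_zero[OF idl] Phat_zero by (auto simp: J_def)
  have Jadd: "a \<in> J \<Longrightarrow> b \<in> J \<Longrightarrow> a + b \<in> J" for a b
    using I_add[OF idl] Phat_add by (auto simp: J_def)
  have Jdiff: "a \<in> J \<Longrightarrow> b \<in> J \<Longrightarrow> a - b \<in> J" for a b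
    using I_diff[OF idl] Phat_diff by (auto simp: J_def)
  have q_eq: "q a = q b \<longleftrightarrow> a - b \<in> I" for a b
    unfolding q_def coset_img mpoly_ring_simps
    by (rule coset_eq) (auto simp: I_zero[OF idl] I_add[OF idl] I_diff[OF idl])
  have r_eq: "r a = r b \<longleftrightarrow> a - b \<in> J" for a b
    unfolding r_def coset_img Phat_ring_simps
    by (rule coset_eq) (auto simp: J0 Jadd Jdiff)
  have phP: "ph a \<in> Phat Z" for a unfolding ph_def Z_def by (rule phi_Phat[OF coh inj])
  have phI: "ph a - a \<in> I" for a unfolding ph_def by (rule phi_cong[OF idl inj fI])
  have cong1: "a - b \<in> I \<Longrightarrow> ph a - ph b \<in> J" for a b
  proof -
    assume ab: "a - b \<in> I"
    have "ph a - ph b = (ph a - a) - (ph b - b) + (a - b)" by simp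
    also have "\<dots> \<in> I" by (rule I_add[OF idl I_diff[OF idl phI phI] ab])
    finally show ?thesis using Phat_diff[OF phP phP] by (simp add: J_def)
  qed
  have cong2: "ph a - ph b \<in> J \<Longrightarrow> a - b \<in> I" for a b
  proof -
    assume ab: "ph a - ph b \<in> J"
    have "a - b = (ph a - ph b) - (ph a - a) + (ph b - b)" by simp
    also have "\<dots> \<in> I" using ab unfolding J_def by (intro I_add[OF idl I_diff[OF idl _ phI] phI]) blast
    finally show ?thesis .
  qed
  have rph: "x \<in> Phat Z \<Longrightarrow> r (ph x) = r x" for x
    using r_eq phI Phat_diff[OF phP, of x x] by (auto simp: J_def)
  define \<Phi> where "\<Phi> C = r (ph (SOME a. C = q a))" for C
  have \<Phi>E: "\<Phi> (q a) = r (ph a)" for a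
  proof -
    have "q a = q (SOME a'. q a = q a')" by (rule someI[of _ a]) simp
    then have "(SOME a'. q a = q a') - a \<in> I" using q_eq by (metis)
    then show ?thesis unfolding \<Phi>_def using r_eq cong1 by blast
  qed
  have carrP: "carrier (mpoly_ring Quot I) = range q"
    by (auto simp: FactRing_def A_RCOSETS_def' q_def)
  have carrH: "carrier (Phat_ring Z Quot J) = r ` Phat Z"
    by (auto simp: FactRing_def A_RCOSETS_def' r_def)
  have multP: "mult (mpoly_ring Quot I) (q a) (q b) = q (a * b)" for a b
    using IP.rcoset_mult_add[of a b] by (simp add: FactRing_def q_def)
  have addP: "add (mpoly_ring Quot I) (q a) (q b) = q (a + b)" for a b
    using IP.a_rcos_sum[of a b] by (simp add: FactRing_def q_def)
  have multH: "x \<in> Phat Z \<Longrightarrow> y \<in> Phat Z \<Longrightarrow> mult (Phat_ring Z Quot J) (r x) (r y) = r (x * y)" for x y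
    using JH.rcoset_mult_add[of x y] by (simp add: FactRing_def r_def)
  have addH: "x \<in> Phat Z \<Longrightarrow> y \<in> Phat Z \<Longrightarrow> add (Phat_ring Z Quot J) (r x) (r y) = r (x + y)" for x y
    using JH.a_rcos_sum[of x y] by (simp add: FactRing_def r_def)
  have hom: "\<Phi> \<in> ring_hom (mpoly_ring Quot I) (Phat_ring Z Quot J)"
  proof (rule ring_hom_memI)
    fix x assume "x \<in> carrier (mpoly_ring Quot I)"
    then obtain a where "x = q a" using carrP by auto
    then show "\<Phi> x \<in> carrier (Phat_ring Z Quot J)" using carrH phP \<Phi>E by auto
  next
    fix x y assume "x \<in> carrier (mpoly_ring Quot I)" "y \<in> carrier (mpoly_ring Quot I)"
    then obtain a b where ab: "x = q a" "y = q b" using carrP by auto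
    have "ph (a * b) - ph a * ph b \<in> J"
    proof -
      have "ph (a * b) - ph a * ph b = (ph (a * b) - a * b) - (ph a * (ph b - b) + (ph a - a) * b)"
        by (simp add: algebra_simps)
      also have "\<dots> \<in> I"
        using I_diff[OF idl phI I_add[OF idl I_lmult[OF idl phI] I_lmult[OF idl phI]]]
        by (simp add: mult.commute[of _ b])
      finally show ?thesis using Phat_diff[OF phP Phat_mult[OF phP phP]] by (simp add: J_def)
    qed
    then show "\<Phi> (x \<otimes>\<^bsub>mpoly_ring Quot I\<^esub> y) = \<Phi> x \<otimes>\<^bsub>Phat_ring Z Quot J\<^esub> \<Phi> y"
      using ab multP multH[OF phP phP] \<Phi>E r_eq by simp
    have "ph (a + b) - (ph a + ph b) \<in> J"
    proof -
      have "ph (a + b) - (ph a + ph b) = (ph (a + b) - (a + b)) - ((ph a - a) + (ph b - b))"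
        by (simp add: algebra_simps)
      also have "\<dots> \<in> I" by (intro I_diff[OF idl phI] I_add[OF idl phI phI])
      finally show ?thesis using Phat_diff[OF phP Phat_add[OF phP phP]] by (simp add: J_def)
    qed
    then show "\<Phi> (x \<oplus>\<^bsub>mpoly_ring Quot I\<^esub> y) = \<Phi> x \<oplus>\<^bsub>Phat_ring Z Quot J\<^esub> \<Phi> y"
      using ab addP addH[OF phP phP] \<Phi>E r_eq by simp
  next
    have "\<one>\<^bsub>mpoly_ring Quot I\<^esub> = q 1" by (simp add: FactRing_def q_def)
    moreover have "\<one>\<^bsub>Phat_ring Z Quot J\<^esub> = r 1" by (simp add: FactRing_def r_def)
    ultimately show "\<Phi> \<one>\<^bsub>mpoly_ring Quot I\<^esub> = \<one>\<^bsub>Phat_ring Z Quot J\<^esub>"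
      using \<Phi>E rph[OF Phat_one] by simp
  qed
  have injP: "inj_on \<Phi> (carrier (mpoly_ring Quot I))"
  proof (rule inj_onI)
    fix x y assume "x \<in> carrier (mpoly_ring Quot I)" "y \<in> carrier (mpoly_ring Quot I)" "\<Phi> x = \<Phi> y"
    then obtain a b where "x = q a" "y = q b" "r (ph a) = r (ph b)" using carrP \<Phi>E by auto
    then show "x = y" using r_eq cong2 q_eq by blast
  qed
  have surjP: "\<Phi> ` carrier (mpoly_ring Quot I) = carrier (Phat_ring Z Quot J)"
  proof
    show "\<Phi> ` carrier (mpoly_ring Quot I) \<subseteq> carrier (Phat_ring Z Quot J)"
      using carrP carrH \<Phi>E phP by auto
    show "carrier (Phat_ring Z Quot J) \<subseteq> \<Phi> ` carrier (mpoly_ring Quot I)"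
    proof
      fix C assume "C \<in> carrier (Phat_ring Z Quot J)"
      then obtain x where "x \<in> Phat Z" "C = r x" using carrH by auto
      then have "C = \<Phi> (q x)" using \<Phi>E rph by simp
      then show "C \<in> \<Phi> ` carrier (mpoly_ring Quot I)" using carrP by auto
    qed
  qed
  have iso: "\<Phi> \<in> ring_iso (mpoly_ring Quot I) (Phat_ring Z Quot J)"
    unfolding ring_iso_def bij_betw_def using hom injP surjP by blast
  have invv: "inv_into (carrier (mpoly_ring Quot I)) \<Phi> (r (var y)) = q (var y)" if y: "y \<notin> Z" for y
  proof -
    have "\<Phi> (q (var y)) = r (var y)" using \<Phi>E rph Phat_var[OF y] by simp
    then show ?thesis using inv_into_f_f[OF injP, of "q (var y)"] carrP by simp
  qed
  show ?thesis
    using iso \<Phi>E invv unfolding Z_def J_def q_def r_def ph_def by blast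
qed




lemma to_props:
  assumes "term_order \<sigma>"
  shows to_refl: "\<sigma> t t" and to_antisym: "\<sigma> s t \<Longrightarrow> \<sigma> t s \<Longrightarrow> s = t"
    and to_trans: "\<sigma> s t \<Longrightarrow> \<sigma> t u \<Longrightarrow> \<sigma> s u" and to_total: "\<sigma> s t \<or> \<sigma> t s"
    and to_mono: "\<sigma> s t \<Longrightarrow> \<sigma> (s + u) (t + u)" and to_zero: "\<sigma> 0 t"
  using assms unfolding term_order_def by blast+

lemma finite_max_ex:
  assumes to: "term_order \<sigma>" and fin: "finite S" and ne: "S \<noteq> {}"
  shows "\<exists>t\<in>S. \<forall>u\<in>S. \<sigma> u t"
  using fin ne
proof (induction S rule: finite_ne_induct)
  case (singleton x) then show ?case using to_refl[OF to] by auto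
next
  case (insert x F)
  then obtain t where t: "t \<in> F" "\<forall>u\<in>F. \<sigma> u t" by blast
  show ?case
  proof (cases "\<sigma> x t")
    case True then show ?thesis using t by auto
  next
    case False
    then have "\<sigma> t x" using to_total[OF to] by blast
    then have "\<forall>u\<in>insert x F. \<sigma> u x" using t to_trans[OF to] to_refl[OF to] by blast
    then show ?thesis by blast
  qed
qed

lemma LT_max:
  assumes to: "term_order \<sigma>" and f: "f \<noteq> 0"
  shows "LT \<sigma> f \<in> Poly_Mapping.keys f \<and> (\<forall>u\<in>Poly_Mapping.keys f. \<sigma> u (LT \<sigma> f))"
proof -
  have ne: "Poly_Mapping.keys f \<noteq> {}" using f by simp
  obtain t where t: "t \<in> Poly_Mapping.keys f" "\<forall>u\<in>Poly_Mapping.keys f. \<sigma> u t"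
    using finite_max_ex[OF to finite_keys ne] by blast
  have uniq: "t' = t" if "t' \<in> Poly_Mapping.keys f \<and> (\<forall>u\<in>Poly_Mapping.keys f. \<sigma> u t')" for t'
    using that t to_antisym[OF to] by blast
  show ?thesis unfolding LT_def
  proof (rule theI2[of _ t])
    show "t \<in> Poly_Mapping.keys f \<and> (\<forall>u\<in>Poly_Mapping.keys f. \<sigma> u t)" using t by blast
  qed (use uniq in blast)+
qed

lemma tdvd_single: "tdvd (Poly_Mapping.single v 1) t \<longleftrightarrow> v \<in> Poly_Mapping.keys t"
proof
  assume "tdvd (Poly_Mapping.single v 1) t"
  then obtain u where "t = Poly_Mapping.single v 1 + u" by (auto simp: tdvd_def)
  then have "Poly_Mapping.lookup t v \<noteq> 0" by (simp add: lookup_add)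
  then show "v \<in> Poly_Mapping.keys t" by (simp add: in_keys_iff)
next
  assume v: "v \<in> Poly_Mapping.keys t"
  have "t = Poly_Mapping.single v 1 + (t - Poly_Mapping.single v 1)"
  proof (rule poly_mapping_eqI)
    fix k show "Poly_Mapping.lookup t k = Poly_Mapping.lookup (Poly_Mapping.single v 1 + (t - Poly_Mapping.single v 1)) k"
      using v by (cases "k = v") (auto simp: lookup_add lookup_minus lookup_single in_keys_iff)
  qed
  then show "tdvd (Poly_Mapping.single v 1) t" unfolding tdvd_def by blast
qed

lemma single_one_inj: "(Poly_Mapping.single a (1::nat) = Poly_Mapping.single b 1) \<longleftrightarrow> a = b"
  by (metis lookup_single_eq lookup_single_not_eq one_neq_zero)

lemma LT_single_term:
  assumes to: "term_order \<sigma>" and f: "f \<noteq> 0" and lt: "LT \<sigma> f = Poly_Mapping.single v 1"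
    and t: "t \<in> Poly_Mapping.keys f" and vt: "v \<in> Poly_Mapping.keys t"
  shows "t = Poly_Mapping.single v 1"
proof -
  have le: "\<sigma> t (Poly_Mapping.single v 1)" using LT_max[OF to f] lt t by auto
  obtain u where u: "t = Poly_Mapping.single v 1 + u" using vt tdvd_single[of v t] by (auto simp: tdvd_def)
  have "\<sigma> (0 + Poly_Mapping.single v 1) (u + Poly_Mapping.single v 1)" by (rule to_mono[OF to to_zero[OF to]])
  then have "\<sigma> (Poly_Mapping.single v 1) t" using u by (simp add: add.commute)
  then show ?thesis using le to_antisym[OF to] by blast
qed

lemma LT_restr:
  assumes "f \<in> Phat Z"
  shows "LT (restr_order \<sigma> Z) f = LT \<sigma> f"
proof -
  have k: "\<And>t. t \<in> Poly_Mapping.keys f \<Longrightarrow> Poly_Mapping.keys t \<inter> Z = {}"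
    using assms unfolding Phat_def indets_def by blast
  have "(\<lambda>t. t \<in> Poly_Mapping.keys f \<and> (\<forall>u\<in>Poly_Mapping.keys f. restr_order \<sigma> Z u t))
      = (\<lambda>t. t \<in> Poly_Mapping.keys f \<and> (\<forall>u\<in>Poly_Mapping.keys f. \<sigma> u t))"
    unfolding restr_order_def fun_eq_iff using k by blast
  then show ?thesis unfolding LT_def by (rule arg_cong[where f=The])
qed


lemma lookup_lin_part:
  "Poly_Mapping.lookup (lin_part (f::('v::finite,'k::field) mpoly)) (Poly_Mapping.single v 1)
     = (if v \<in> indets f then Poly_Mapping.lookup f (Poly_Mapping.single v 1) else 0)"
proof -
  have "Poly_Mapping.lookup (lin_part f) (Poly_Mapping.single v 1)
     = (\<Sum>w\<in>indets f. if w = v then Poly_Mapping.lookup f (Poly_Mapping.single w 1) else 0)"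
    unfolding lin_part_def lookup_sum lookup_single when_def single_one_inj by (intro sum.cong) auto
  also have "\<dots> = (if v \<in> indets f then Poly_Mapping.lookup f (Poly_Mapping.single v 1) else 0)"
    by (simp add: sum.delta')
  finally show ?thesis .
qed

lemma GB_fI:
  assumes "Z_sep_GB \<sigma> I s z f G" "i < s"
  shows "var (z i) - tail (z i) (f i) \<in> I"
proof -
  have "LT \<sigma> (f i) = Poly_Mapping.single (z i) 1" using assms by (simp add: Z_sep_GB_def)
  then have "var (z i) - tail (z i) (f i) = const (1 / LC \<sigma> (f i)) * f i"
    by (simp add: tail_def LC_def)
  moreover have "const (1 / LC \<sigma> (f i)) * f i \<in> basis_set \<sigma> s f G"
    using assms(2) unfolding basis_set_def by blast
  moreover have "basis_set \<sigma> s f G \<subseteq> I" using assms(1) by (simp add: Z_sep_GB_def is_GB_def)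
  ultimately show ?thesis by auto
qed

lemma part5:
  fixes I :: "('v::finite, 'k::field) mpoly set"
  assumes to: "term_order \<sigma>" and inj: "inj_on z {..<s}" and IM: "I \<subseteq> Mideal"
    and hF: "\<And>i. i < s \<Longrightarrow> \<exists>F\<in>I. F \<noteq> 0 \<and> LT \<sigma> F = Poly_Mapping.single (z i) 1"
    and red: "is_reduced_GB \<sigma> B I"
  shows "\<exists>f' G'. B = basis_set \<sigma> s f' G' \<and> Z_sep_GB \<sigma> I s z f' G'"
proof -
  define T where "T i = Poly_Mapping.single (z i) (1::nat)" for i
  define Z where "Z = z ` {..<s}"
  have finB: "finite B" and BI: "B \<subseteq> I" and B0: "0 \<notin> B"
    and GB: "\<And>h. h \<in> I \<Longrightarrow> h \<noteq> 0 \<Longrightarrow> \<exists>g\<in>B. tdvd (LT \<sigma> g) (LT \<sigma> h)"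
    using red by (auto simp: is_reduced_GB_def is_GB_def)
  have isGB: "is_GB \<sigma> B I" using red by (simp add: is_reduced_GB_def)
  have LC1: "\<And>g. g \<in> B \<Longrightarrow> LC \<sigma> g = 1" using red by (simp add: is_reduced_GB_def)
  have rd: "\<And>g t g'. g \<in> B \<Longrightarrow> t \<in> Poly_Mapping.keys g \<Longrightarrow> g' \<in> B \<Longrightarrow> g' \<noteq> g \<Longrightarrow> \<not> tdvd (LT \<sigma> g') t"
    using red by (simp add: is_reduced_GB_def)
  have LTk: "\<And>g. g \<in> B \<Longrightarrow> LT \<sigma> g \<in> Poly_Mapping.keys g" using LT_max[OF to] B0 by metis
  have Tinj: "i < s \<Longrightarrow> j < s \<Longrightarrow> T i = T j \<Longrightarrow> i = j" for i j
    using inj single_one_inj unfolding T_def inj_on_def by (metis lessThan_iff)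
  have uniqB: "g = g'" if "g \<in> B" "g' \<in> B" "LT \<sigma> g = LT \<sigma> g'" for g g'
  proof (rule ccontr)
    assume "g \<noteq> g'"
    then have "\<not> tdvd (LT \<sigma> g') (LT \<sigma> g)" using rd[OF that(1) LTk[OF that(1)] that(2)] by auto
    moreover have "tdvd (LT \<sigma> g') (LT \<sigma> g)" using that(3) unfolding tdvd_def by (metis add.right_neutral)
    ultimately show False by blast
  qed
  have exB: "\<exists>b\<in>B. LT \<sigma> b = T i" if i: "i < s" for i
  proof -
    obtain F where F: "F \<in> I" "F \<noteq> 0" "LT \<sigma> F = T i" using hF[OF i] unfolding T_def by blast
    obtain b where b: "b \<in> B" "tdvd (LT \<sigma> b) (T i)" using GB[OF F(1,2)] F(3) by auto
    obtain u where u: "T i = LT \<sigma> b + u" using b(2) by (auto simp: tdvd_def)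
    have nz: "LT \<sigma> b \<noteq> 0"
    proof
      assume "LT \<sigma> b = 0"
      then have "Poly_Mapping.lookup b 0 \<noteq> 0" using LTk[OF b(1)] by (simp add: in_keys_iff)
      moreover have "b \<in> Mideal" using b(1) BI IM by blast
      ultimately show False by (simp add: Mideal_def)
    qed
    have "LT \<sigma> b = T i"
    proof (rule poly_mapping_eqI)
      fix k
      have e: "Poly_Mapping.lookup (T i) k = Poly_Mapping.lookup (LT \<sigma> b) k + Poly_Mapping.lookup u k"
        using u by (simp add: lookup_add)
      show "Poly_Mapping.lookup (LT \<sigma> b) k = Poly_Mapping.lookup (T i) k"
      proof (cases "k = z i")
        case True
        have "Poly_Mapping.lookup (LT \<sigma> b) (z i) \<noteq> 0"
        proof
          assume h: "Poly_Mapping.lookup (LT \<sigma> b) (z i) = 0"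
          have "LT \<sigma> b = 0"
          proof (rule poly_mapping_eqI)
            fix k' show "Poly_Mapping.lookup (LT \<sigma> b) k' = Poly_Mapping.lookup 0 k'"
            proof (cases "k' = z i")
              case False
              have "Poly_Mapping.lookup (T i) k' = Poly_Mapping.lookup (LT \<sigma> b) k' + Poly_Mapping.lookup u k'"
                using u by (simp add: lookup_add)
              then show ?thesis using False by (simp add: T_def lookup_single)
            qed (use h in simp)
          qed
          then show False using nz by simp
        qed
        then show ?thesis using e True by (simp add: T_def)
      next
        case False then show ?thesis using e by (simp add: T_def lookup_single)
      qed
    qed
    then show ?thesis using b(1) by blast
  qed
  define f' where "f' i = (SOME b. b \<in> B \<and> LT \<sigma> b = T i)" for i
  have f'B: "f' i \<in> B" and f'LT: "LT \<sigma> (f' i) = T i" if "i < s" for i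
    using someI_ex[OF exB[OF that, unfolded Bex_def]] unfolding f'_def by auto
  define G' where "G' = {b \<in> B. \<forall>i<s. LT \<sigma> b \<noteq> T i}"
  have f'0: "f' i \<noteq> 0" if "i < s" for i using f'B[OF that] B0 by auto
  have f'LC: "Poly_Mapping.lookup (f' i) (T i) = 1" if "i < s" for i
    using LC1[OF f'B[OF that]] f'LT[OF that] by (simp add: LC_def)
  have f'M: "f' i \<in> Mideal" if "i < s" for i using f'B[OF that] BI IM by blast
  have basis: "B = basis_set \<sigma> s f' G'"
  proof
    show "B \<subseteq> basis_set \<sigma> s f' G'"
    proof
      fix b assume b: "b \<in> B"
      show "b \<in> basis_set \<sigma> s f' G'"
      proof (cases "b \<in> G'")
        case False
        then obtain i where i: "i < s" "LT \<sigma> b = T i" using b by (auto simp: G'_def)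
        then have "b = f' i" using uniqB[OF b f'B[OF i(1)]] f'LT[OF i(1)] by simp
        moreover have "LC \<sigma> (f' i) = 1" using LC1[OF f'B[OF i(1)]] .
        ultimately have "b = const (1 / LC \<sigma> (f' i)) * f' i" by (simp add: const_def)
        then show ?thesis using i(1) unfolding basis_set_def by blast
      qed (simp add: basis_set_def)
    qed
    show "basis_set \<sigma> s f' G' \<subseteq> B"
    proof
      fix b assume "b \<in> basis_set \<sigma> s f' G'"
      then consider i where "i < s" "b = const (1 / LC \<sigma> (f' i)) * f' i" | "b \<in> G'"
        unfolding basis_set_def by blast
      then show "b \<in> B"
      proof cases
        case 1
        then have "b = f' i" using LC1[OF f'B[OF 1(1)]] by (simp add: const_def)
        then show ?thesis using f'B[OF 1(1)] by simp
      qed (simp add: G'_def)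
    qed
  qed
  have notin: "z i \<notin> indets (f' j)" if "i < s" "j < s" "j \<noteq> i" for i j
  proof
    assume "z i \<in> indets (f' j)"
    then obtain t where t: "t \<in> Poly_Mapping.keys (f' j)" "z i \<in> Poly_Mapping.keys t"
      unfolding indets_def by blast
    have "T i \<noteq> T j" using Tinj that by blast
    then have "f' i \<noteq> f' j" using f'LT[OF that(1)] f'LT[OF that(2)] by auto
    then have "\<not> tdvd (T i) t" using rd[OF f'B[OF that(2)] t(1) f'B[OF that(1)]] f'LT[OF that(1)] by simp
    then show False using t(2) tdvd_single[of "z i" t] unfolding T_def by simp
  qed
  have zsep: "z_separating (z i) (f' i)" if i: "i < s" for i
  proof -
    have Tk: "T i \<in> Poly_Mapping.keys (f' i)" using LTk[OF f'B[OF i]] f'LT[OF i] by simp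
    then have zi: "z i \<in> indets (f' i)" unfolding indets_def T_def by force
    have "Poly_Mapping.lookup (lin_part (f' i)) (T i) = 1"
      using lookup_lin_part[of "f' i" "z i"] zi f'LC[OF i] unfolding T_def by simp
    then have LK: "T i \<in> Poly_Mapping.keys (lin_part (f' i))" by (simp add: in_keys_iff)
    then have l1: "lin_part (f' i) \<noteq> 0" by auto
    have l2: "z i \<in> indets (lin_part (f' i))" using LK unfolding indets_def T_def by force
    have tl: "tail (z i) (f' i) = var (z i) - f' i"
      using f'LC[OF i] by (simp add: tail_def T_def const_def)
    have l3: "z i \<notin> indets (tail (z i) (f' i))"
    proof
      assume "z i \<in> indets (tail (z i) (f' i))"
      then obtain t where t: "t \<in> Poly_Mapping.keys (var (z i) - f' i)" "z i \<in> Poly_Mapping.keys t"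
        unfolding indets_def tl by blast
      show False
      proof (cases "t = T i")
        case True
        then show False using t(1) f'LC[OF i] by (simp add: in_keys_iff lookup_minus var_def T_def)
      next
        case False
        then have "t \<in> Poly_Mapping.keys (f' i)"
          using t(1) keys_diff[of "var (z i)" "f' i"] by (auto simp: var_def T_def)
        then show False using LT_single_term[OF to f'0[OF i] f'LT[OF i, unfolded T_def] _ t(2)] False
          unfolding T_def by blast
      qed
    qed
    show ?thesis unfolding z_separating_def using f'M[OF i] l1 l2 l3 by blast
  qed
  have coh: "coh_Z_sep s z f'"
    unfolding coh_Z_sep_def using f'0 f'M zsep notin by blast
  have G'B: "G' \<subseteq> B" by (auto simp: G'_def)
  have G'P: "G' \<subseteq> Phat Z"
  proof
    fix g assume g: "g \<in> G'"
    show "g \<in> Phat Z" unfolding Phat_def mem_Collect_eq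
    proof (rule subsetI, rule ComplI)
      fix w assume w: "w \<in> indets g" "w \<in> Z"
      then obtain i where i: "i < s" "w = z i" by (auto simp: Z_def)
      obtain t where t: "t \<in> Poly_Mapping.keys g" "z i \<in> Poly_Mapping.keys t"
        using w i unfolding indets_def by blast
      have "f' i \<noteq> g" using g f'LT[OF i(1)] i(1) by (auto simp: G'_def)
      then have "\<not> tdvd (T i) t" using rd[of g t "f' i"] g t(1) f'B[OF i(1)] f'LT[OF i(1)] G'B by auto
      then show False using t(2) tdvd_single[of "z i" t] unfolding T_def by simp
    qed
  qed
  have redG: "is_reduced_GB (restr_order \<sigma> Z) G' (I \<inter> Phat Z)"
    unfolding is_reduced_GB_def is_GB_def
  proof (intro conjI ballI impI)
    show "finite G'" using finB G'B finite_subset by blast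
    show "G' \<subseteq> I \<inter> Phat Z" using G'B BI G'P by blast
    show "0 \<notin> G'" using B0 G'B by blast
  next
    fix h assume h: "h \<in> I \<inter> Phat Z" "h \<noteq> 0"
    obtain b where b: "b \<in> B" "tdvd (LT \<sigma> b) (LT \<sigma> h)" using GB h by blast
    have bG: "b \<in> G'"
    proof (rule ccontr)
      assume "b \<notin> G'"
      then obtain i where i: "i < s" "LT \<sigma> b = T i" using b by (auto simp: G'_def)
      then have "z i \<in> Poly_Mapping.keys (LT \<sigma> h)" using b(2) tdvd_single[of "z i" "LT \<sigma> h"] unfolding T_def by simp
      moreover have "LT \<sigma> h \<in> Poly_Mapping.keys h" using LT_max[OF to h(2)] by blast
      ultimately have "z i \<in> indets h" unfolding indets_def by blast
      then show False using h(1) i(1) by (auto simp: Phat_def Z_def)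
    qed
    show "\<exists>g\<in>G'. tdvd (LT (restr_order \<sigma> Z) g) (LT (restr_order \<sigma> Z) h)"
    proof
      have "b \<in> Phat Z" using bG G'P by blast
      then show "tdvd (LT (restr_order \<sigma> Z) b) (LT (restr_order \<sigma> Z) h)"
        using b(2) LT_restr[of h Z \<sigma>] LT_restr[of b Z \<sigma>] h(1) by simp
    qed (rule bG)
  next
    fix g assume g: "g \<in> G'"
    have gP: "g \<in> Phat Z" using g G'P by blast
    show "LC (restr_order \<sigma> Z) g = 1" using LC1[of g] g G'B LT_restr[OF gP] by (auto simp: LC_def)
  next
    fix g t g' assume g: "g \<in> G'" "t \<in> Poly_Mapping.keys g" "g' \<in> G'" "g' \<noteq> g"
    have "g' \<in> Phat Z" using g G'P by blast
    then show "\<not> tdvd (LT (restr_order \<sigma> Z) g') t"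
      using rd[of g t g'] g G'B LT_restr[of g' Z \<sigma>] by auto
  qed
  have "Z_sep_GB \<sigma> I s z f' G'"
    unfolding Z_sep_GB_def using coh f'LT isGB basis redG unfolding T_def Z_def by auto
  then show ?thesis using basis by blast
qed

theorem theorem2p13:
  fixes I :: "('v::finite, 'k::field) mpoly set"
    and s :: nat and z :: "nat \<Rightarrow> 'v"
    and \<sigma> :: "'v pterm \<Rightarrow> 'v pterm \<Rightarrow> bool"
    and f :: "nat \<Rightarrow> ('v, 'k) mpoly" and G :: "('v, 'k) mpoly set"
  assumes "ideal I mpoly_ring"
    and "I \<subseteq> Mideal"
    and "inj_on z {..<s}"
    and "Z_sep_order \<sigma> I s z"
    and "Z_sep_GB \<sigma> I s z f G"
  shows "(\<forall>a. phi s z f a \<in> Phat (z ` {..<s})) \<and>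
    (\<exists>\<Phi>. \<Phi> \<in> ring_iso (mpoly_ring Quot I)
                   (Phat_ring (z ` {..<s}) Quot (I \<inter> Phat (z ` {..<s})))
      \<and> (\<forall>a. \<Phi> (a_r_coset mpoly_ring I a)
              = a_r_coset (Phat_ring (z ` {..<s})) (I \<inter> Phat (z ` {..<s})) (phi s z f a))
      \<and> (\<forall>y. y \<notin> z ` {..<s} \<longrightarrow>
           inv_into (carrier (mpoly_ring Quot I)) \<Phi>
             (a_r_coset (Phat_ring (z ` {..<s})) (I \<inter> Phat (z ` {..<s})) (var y))
           = a_r_coset mpoly_ring I (var y)))
    \<and> (\<forall>f' G'. Z_sep_GB \<sigma> I s z f' G' \<longrightarrow>
         (\<forall>a. a_r_coset (Phat_ring (z ` {..<s})) (I \<inter> Phat (z ` {..<s})) (phi s z f' a)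
            = a_r_coset (Phat_ring (z ` {..<s})) (I \<inter> Phat (z ` {..<s})) (phi s z f a)))
    \<and> (\<forall>B. is_reduced_GB \<sigma> B I \<longrightarrow> (\<exists>f' G'. B = basis_set \<sigma> s f' G' \<and> Z_sep_GB \<sigma> I s z f' G'))"
proof -
  note idl = assms(1) and inj = assms(3)
  obtain F where to: "term_order \<sigma>"
    and F: "\<And>i. i < s \<Longrightarrow> F i \<in> I \<and> F i \<noteq> 0 \<and> LT \<sigma> (F i) = Poly_Mapping.single (z i) 1"
    using assms(4) unfolding Z_sep_order_def by blast
  have coh: "coh_Z_sep s z f" using assms(5) by (simp add: Z_sep_GB_def)
  have fI: "\<And>i. i < s \<Longrightarrow> var (z i) - tail (z i) (f i) \<in> I" using GB_fI[OF assms(5)] .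
  have p1: "\<forall>a. phi s z f a \<in> Phat (z ` {..<s})" using phi_Phat[OF coh inj] by blast
  have p2: "\<exists>\<Phi>. \<Phi> \<in> ring_iso (mpoly_ring Quot I)
                   (Phat_ring (z ` {..<s}) Quot (I \<inter> Phat (z ` {..<s})))
      \<and> (\<forall>a. \<Phi> (a_r_coset mpoly_ring I a)
              = a_r_coset (Phat_ring (z ` {..<s})) (I \<inter> Phat (z ` {..<s})) (phi s z f a))
      \<and> (\<forall>y. y \<notin> z ` {..<s} \<longrightarrow>
           inv_into (carrier (mpoly_ring Quot I)) \<Phi>
             (a_r_coset (Phat_ring (z ` {..<s})) (I \<inter> Phat (z ` {..<s})) (var y))
           = a_r_coset mpoly_ring I (var y))"
    by (rule iso_part[OF idl inj coh fI])
  have p3: "\<forall>f' G'. Z_sep_GB \<sigma> I s z f' G' \<longrightarrow>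
         (\<forall>a. a_r_coset (Phat_ring (z ` {..<s})) (I \<inter> Phat (z ` {..<s})) (phi s z f' a)
            = a_r_coset (Phat_ring (z ` {..<s})) (I \<inter> Phat (z ` {..<s})) (phi s z f a))"
  proof (intro allI impI)
    fix f' G' a assume G': "Z_sep_GB \<sigma> I s z f' G'"
    have coh': "coh_Z_sep s z f'" using G' by (simp add: Z_sep_GB_def)
    have fI': "\<And>i. i < s \<Longrightarrow> var (z i) - tail (z i) (f' i) \<in> I" using GB_fI[OF G'] .
    define J where "J = I \<inter> Phat (z ` {..<s})"
    have "phi s z f' a - phi s z f a = (phi s z f' a - a) - (phi s z f a - a)" by simp
    also have "\<dots> \<in> I" by (rule I_diff[OF idl phi_cong[OF idl inj fI'] phi_cong[OF idl inj fI]])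
    finally have d: "phi s z f' a - phi s z f a \<in> J"
      using Phat_diff[OF phi_Phat[OF coh' inj] phi_Phat[OF coh inj]] by (simp add: J_def)
    have J0: "0 \<in> J" using I_zero[OF idl] Phat_zero by (auto simp: J_def)
    have Jadd: "x \<in> J \<Longrightarrow> y \<in> J \<Longrightarrow> x + y \<in> J" for x y
      using I_add[OF idl] Phat_add by (auto simp: J_def)
    have Jdiff: "x \<in> J \<Longrightarrow> y \<in> J \<Longrightarrow> x - y \<in> J" for x y
      using I_diff[OF idl] Phat_diff by (auto simp: J_def)
    have "(\<lambda>h. h + phi s z f' a) ` J = (\<lambda>h. h + phi s z f a) ` J"
      using coset_eq[of J, OF J0 Jadd Jdiff] d by blast
    then show "a_r_coset (Phat_ring (z ` {..<s})) (I \<inter> Phat (z ` {..<s})) (phi s z f' a)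
            = a_r_coset (Phat_ring (z ` {..<s})) (I \<inter> Phat (z ` {..<s})) (phi s z f a)"
      unfolding coset_img Phat_ring_simps J_def .
  qed
  have p4: "\<forall>B. is_reduced_GB \<sigma> B I \<longrightarrow> (\<exists>f' G'. B = basis_set \<sigma> s f' G' \<and> Z_sep_GB \<sigma> I s z f' G')"
  proof (intro allI impI)
    fix B assume "is_reduced_GB \<sigma> B I"
    moreover have "\<And>i. i < s \<Longrightarrow> \<exists>F\<in>I. F \<noteq> 0 \<and> LT \<sigma> F = Poly_Mapping.single (z i) 1"
      using F by blast
    ultimately show "\<exists>f' G'. B = basis_set \<sigma> s f' G' \<and> Z_sep_GB \<sigma> I s z f' G'"
      using part5[OF to inj assms(2)] by blast
  qed
  show ?thesis using p1 p2 p3 p4 by blast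
qed

end
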